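(* (i) $F_{L_2}\Subset F^{*}_{\mathcal T_1}$ but $F_{L_1}\not\Subset F^{*}_{\mathcal T_1}$. (ii) $F_{L_4}\Subset F^{**}_{\mathcal T_1}$ but $F_{L_3}\not\Subset F^{**}_{\mathcal T_1}$. (iii) $F_{L_3}\Subset F^{*}_{\mathcal T_2}$ but $F_{L_4}\not\Subset F^{*}_{\mathcal T_2}$. (iv) $F_Q\Subset F^{*}_{\mathcal T_1}$, $F_Q\Subset F^{**}_{\mathcal T_1}$ and $F_Q\Subset F^{*}_{\mathcal T_2}$.
   Context: $H_k\subseteq\mathbb R[x,y,z]$: real ternary forms of degree $k$; $P_{3,4}=\{f\in H_4: f\ge0\text{ on }\mathbb P^2(\mathbb R)\}$. For $f\in P_{3,4}$, $F_f=\{g\in P_{3,4}: f-\epsilon g\in P_{3,4}$ for some $\epsilon>0\}$ (the smallest face of $P_{3,4}$ containing $f$). $GL_3(\mathbb R)$ acts on forms by $(\sigma f)(a)=f(\sigma^{-1}a)$. For faces $F,G$ of $P_{3,4}$, $F\Subset G$ means there is $\sigma\in GL_3(\mathbb R)$ with $F\subseteq\sigma(G)$. For a real line $l'$ (identified with a defining linear form) and a projective linear subspace $U\subseteq\mathbb P^2(\mathbb R)$, $F_{(l',U)}=\{l'^2g: g\in H_2,\ g\ge0\text{ on }\mathbb P^2(\mathbb R),\ g|_U=0\}$. Fix distinct real lines $l,k$, $p\in l$, $q\notin l$: $F_{L_1}=F_{(l,\{q\})}$, $F_{L_2}=F_{(l,\{p\})}$, $F_{L_3}=F_{(l,k)}$,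 $F_{L_4}=F_{(l,l)}$. Further $F_Q=F_{g^2}$ with $g=x^2-y^2+z^2$; $F^{*}_{\mathcal T_1}=F_f$ with $f=(xy+z^2)^2+y^2z^2+y^4$; $F^{**}_{\mathcal T_1}=F_f$ with $f=(xy+z^2)^2+y^4$; $F^{*}_{\mathcal T_2}=F_f$ with $f=(xy+z^2)^2+y^2z^2$. *)

theory Defs
  imports "HOL-Analysis.Analysis"
begin

text \<open>Real ternary forms are represented as functions on real^3 (polynomial functions
  determine the polynomial uniquely). Coordinates: x = v$1, y = v$2, z = v$3.\<close>

definition is_form :: "nat \<Rightarrow> (real^3 \<Rightarrow> real) \<Rightarrow> bool" where
  "is_form d f \<longleftrightarrow> (\<exists>c :: nat \<Rightarrow> nat \<Rightarrow> real. \<forall>v.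
     f v = (\<Sum>i\<le>d. \<Sum>j\<le>d - i. c i j * (v$1)^i * (v$2)^j * (v$3)^(d - i - j)))"

text \<open>Nonnegativity on the real projective plane (equivalently on all of real^3,
  since forms are homogeneous; here all degrees are even).\<close>
definition psd :: "(real^3 \<Rightarrow> real) \<Rightarrow> bool" where
  "psd f \<longleftrightarrow> (\<forall>v. v \<noteq> 0 \<longrightarrow> f v \<ge> 0)"

definition P34 :: "(real^3 \<Rightarrow> real) set" where
  "P34 = {f. is_form 4 f \<and> psd f}"

definition face_of_form :: "(real^3 \<Rightarrow> real) \<Rightarrow> (real^3 \<Rightarrow> real) set" where
  "face_of_form f = {g \<in> P34. \<exists>\<epsilon>>0. (\<lambda>v. f v - \<epsilon> * g v) \<in> P34}"

definition act :: "real^3^3 \<Rightarrow> (real^3 \<Rightarrow> real) \<Rightarrow> (real^3 \<Rightarrow> real)" where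
  "act \<sigma> f = (\<lambda>a. f (matrix_inv \<sigma> *v a))"

definition subface :: "(real^3 \<Rightarrow> real) set \<Rightarrow> (real^3 \<Rightarrow> real) set \<Rightarrow> bool" where
  "subface F G \<longleftrightarrow> (\<exists>\<sigma>. invertible \<sigma> \<and> F \<subseteq> act \<sigma> ` G)"

text \<open>F_(l',U): l' a linear form (given by its coefficient vector), U a projective linear
  subspace given as the corresponding linear subspace of real^3.\<close>
definition F_lU :: "real^3 \<Rightarrow> (real^3) set \<Rightarrow> (real^3 \<Rightarrow> real) set" where
  "F_lU l U = {(\<lambda>v. (l \<bullet> v)^2 * g v) | g. is_form 2 g \<and> psd g \<and> (\<forall>u\<in>U. g u = 0)}"

definition proj_point :: "real^3 \<Rightarrow> (real^3) set" where "proj_point p = span {p}"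
definition proj_line :: "real^3 \<Rightarrow> (real^3) set" where "proj_line k = {v. k \<bullet> v = 0}"

definition FQ :: "(real^3 \<Rightarrow> real) set" where
  "FQ = face_of_form (\<lambda>v. ((v$1)^2 - (v$2)^2 + (v$3)^2)^2)"

definition FT1s :: "(real^3 \<Rightarrow> real) set" where
  "FT1s = face_of_form (\<lambda>v. (v$1 * v$2 + (v$3)^2)^2 + (v$2)^2 * (v$3)^2 + (v$2)^4)"

definition FT1ss :: "(real^3 \<Rightarrow> real) set" where
  "FT1ss = face_of_form (\<lambda>v. (v$1 * v$2 + (v$3)^2)^2 + (v$2)^4)"

definition FT2s :: "(real^3 \<Rightarrow> real) set" where
  "FT2s = face_of_form (\<lambda>v. (v$1 * v$2 + (v$3)^2)^2 + (v$2)^2 * (v$3)^2)"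

end

theory Submission
  imports Defs "HOL-Computational_Algebra.Polynomial"
begin


definition TT :: "nat \<Rightarrow> (nat\<times>nat) set" where "TT d = {(i,j). i \<le> d \<and> j \<le> d - i}"
definition mon :: "nat \<Rightarrow> nat\<times>nat \<Rightarrow> real^3 \<Rightarrow> real" where
  "mon d ij v = (v$1)^(fst ij) * (v$2)^(snd ij) * (v$3)^(d - fst ij - snd ij)"

lemma TT_eq: "TT d = Sigma {..d} (\<lambda>i. {..d-i})" by (auto simp: TT_def)
lemma finite_TT: "finite (TT d)" by (simp add: TT_eq)

lemma is_form_alt: "is_form d f \<longleftrightarrow> (\<exists>c. \<forall>v. f v = (\<Sum>ij\<in>TT d. c ij * mon d ij v))"
proof -
  have *: "(\<Sum>i\<le>d. \<Sum>j\<le>d - i. c i j * (v$1)^i * (v$2)^j * (v$3)^(d - i - j))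
     = (\<Sum>ij\<in>TT d. c (fst ij) (snd ij) * mon d ij v)" for c v
    unfolding TT_eq by (subst sum.Sigma) (auto simp: mon_def mult.assoc intro!: sum.cong)
  show ?thesis unfolding is_form_def
  proof
    assume "\<exists>c. \<forall>v. f v = (\<Sum>i\<le>d. \<Sum>j\<le>d - i. c i j * v $ 1 ^ i * v $ 2 ^ j * v $ 3 ^ (d - i - j))"
    then obtain c where "\<forall>v. f v = (\<Sum>i\<le>d. \<Sum>j\<le>d - i. c i j * v $ 1 ^ i * v $ 2 ^ j * v $ 3 ^ (d - i - j))" by blast
    then show "\<exists>c. \<forall>v. f v = (\<Sum>ij\<in>TT d. c ij * mon d ij v)" 
      by (intro exI[of _ "\<lambda>ij. c (fst ij) (snd ij)"] allI) (simp only: * [symmetric])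
  next
    assume "\<exists>c. \<forall>v. f v = (\<Sum>ij\<in>TT d. c ij * mon d ij v)"
    then obtain c where "\<forall>v. f v = (\<Sum>ij\<in>TT d. c ij * mon d ij v)" by blast
    then show "\<exists>c. \<forall>v. f v = (\<Sum>i\<le>d. \<Sum>j\<le>d - i. c i j * v $ 1 ^ i * v $ 2 ^ j * v $ 3 ^ (d - i - j))" 
      by (intro exI[of _ "\<lambda>i j. c (i,j)"] allI) (simp only: * fst_conv snd_conv prod.collapse)
  qed
qed

lemma is_formI_gen:
  assumes "finite A" "\<phi> ` A \<subseteq> TT d" "\<And>v. f v = (\<Sum>x\<in>A. e x * mon d (\<phi> x) v)"
  shows "is_form d f"
  unfolding is_form_alt
proof (intro exI allI)
  fix v
  have "(\<Sum>ij\<in>TT d. (\<Sum>x\<in>{x\<in>A. \<phi> x = ij}. e x) * mon d ij v)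
      = (\<Sum>ij\<in>TT d. (\<Sum>x\<in>{x\<in>A. \<phi> x = ij}. e x * mon d (\<phi> x) v))"
    by (auto simp: sum_distrib_right intro!: sum.cong)
  also have "\<dots> = (\<Sum>x\<in>A. e x * mon d (\<phi> x) v)"
    using sum.group[OF assms(1) finite_TT assms(2)] .
  finally show "f v = (\<Sum>ij\<in>TT d. (\<Sum>x\<in>{x\<in>A. \<phi> x = ij}. e x) * mon d ij v)"
    using assms(3) by simp
qed

lemma is_form_0: "is_form d (\<lambda>v. 0)"
  unfolding is_form_alt by (intro exI[of _ "\<lambda>_. 0"]) simp

lemma is_form_add: "is_form d f \<Longrightarrow> is_form d g \<Longrightarrow> is_form d (\<lambda>v. f v + g v)"
proof -
  assume "is_form d f" "is_form d g"
  then obtain c c' where "\<forall>v. f v = (\<Sum>ij\<in>TT d. c ij * mon d ij v)" "\<forall>v. g v = (\<Sum>ij\<in>TT d. c' ij * mon d ij v)"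
    unfolding is_form_alt by blast
  then show ?thesis unfolding is_form_alt
    by (intro exI[of _ "\<lambda>ij. c ij + c' ij"]) (simp add: sum.distrib distrib_right)
qed

lemma is_form_neg: "is_form d f \<Longrightarrow> is_form d (\<lambda>v. - f v)"
proof -
  assume "is_form d f"
  then obtain c where "\<forall>v. f v = (\<Sum>ij\<in>TT d. c ij * mon d ij v)" 
    unfolding is_form_alt by blast
  then show ?thesis unfolding is_form_alt
    by (intro exI[of _ "\<lambda>ij. - c ij"]) (simp add: sum_negf)
qed

lemma is_form_diff: "is_form d f \<Longrightarrow> is_form d g \<Longrightarrow> is_form d (\<lambda>v. f v - g v)"
  using is_form_add[of d f "\<lambda>v. - g v"] is_form_neg[of d g] by simp

lemma mon_mult:
  assumes "x \<in> TT a" "y \<in> TT b"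
  shows "mon a x v * mon b y v = mon (a+b) (fst x + fst y, snd x + snd y) v"
proof -
  have e: "a + b - (fst x + fst y) - (snd x + snd y) = (a - fst x - snd x) + (b - fst y - snd y)"
    using assms by (auto simp: TT_def)
  show ?thesis unfolding mon_def fst_conv snd_conv e power_add by (simp add: algebra_simps)
qed

lemma is_form_mult: "is_form a f \<Longrightarrow> is_form b g \<Longrightarrow> a + b = d \<Longrightarrow> is_form d (\<lambda>v. f v * g v)"
proof -
  assume "is_form a f" "is_form b g" "a + b = d"
  then obtain c c' where c: "\<And>v. f v = (\<Sum>ij\<in>TT a. c ij * mon a ij v)"
    and c': "\<And>v. g v = (\<Sum>ij\<in>TT b. c' ij * mon b ij v)" unfolding is_form_alt by blast
  show ?thesis
  proof (rule is_formI_gen[where A="TT a \<times> TT b" and e = "\<lambda>(x,y). c x * c' y"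
        and \<phi> = "\<lambda>(x,y). (fst x + fst y, snd x + snd y)"])
    show "finite (TT a \<times> TT b)" by (simp add: finite_TT)
    show "(\<lambda>(x, y). (fst x + fst y, snd x + snd y)) ` (TT a \<times> TT b) \<subseteq> TT d"
      using \<open>a+b=d\<close> by (auto simp: TT_def)
    fix v
    have "f v * g v = (\<Sum>x\<in>TT a. \<Sum>y\<in>TT b. (c x * mon a x v) * (c' y * mon b y v))"
      unfolding c c' by (rule sum_product)
    also have "\<dots> = (\<Sum>(x,y)\<in>TT a \<times> TT b. (c x * mon a x v) * (c' y * mon b y v))"
      by (rule sum.cartesian_product)
    also have "\<dots> = (\<Sum>xy\<in>TT a \<times> TT b. (case xy of (x,y) \<Rightarrow> c x * c' y) * mon d (case xy of (x,y) \<Rightarrow> (fst x + fst y, snd x + snd y)) v)"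
    proof (intro sum.cong refl)
      fix xy assume "xy \<in> TT a \<times> TT b"
      then obtain x y where xy: "xy = (x,y)" "x \<in> TT a" "y \<in> TT b" by auto
      show "(case xy of (x,y) \<Rightarrow> (c x * mon a x v) * (c' y * mon b y v)) = (case xy of (x,y) \<Rightarrow> c x * c' y) * mon d (case xy of (x,y) \<Rightarrow> (fst x + fst y, snd x + snd y)) v"
        using mon_mult[OF xy(2,3), of v] \<open>a+b=d\<close> by (simp add: xy algebra_simps)
    qed
    finally show "f v * g v = (\<Sum>xy\<in>TT a \<times> TT b. (case xy of (x,y) \<Rightarrow> c x * c' y) * mon d (case xy of (x,y) \<Rightarrow> (fst x + fst y, snd x + snd y)) v)" .
  qed
qed

lemma is_form_const: "is_form 0 (\<lambda>v. c)"
  unfolding is_form_def by (intro exI[of _ "\<lambda>_ _. c"]) simp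

lemma is_form_x1: "is_form 1 (\<lambda>v. v$1)"
  unfolding is_form_def by (intro exI[of _ "\<lambda>i j. if i = 1 then 1 else 0"]) (simp add: atMost_Suc)
lemma is_form_x2: "is_form 1 (\<lambda>v. v$2)"
  unfolding is_form_def by (intro exI[of _ "\<lambda>i j. if i = 0 \<and> j = 1 then 1 else 0"]) (simp add: atMost_Suc)
lemma is_form_x3: "is_form 1 (\<lambda>v. v$3)"
  unfolding is_form_def by (intro exI[of _ "\<lambda>i j. if i = 0 \<and> j = 0 then 1 else 0"]) (simp add: atMost_Suc)

lemma is_form_pow: "is_form a f \<Longrightarrow> n * a = d \<Longrightarrow> is_form d (\<lambda>v. f v ^ n)"
proof (induction n arbitrary: d)
  case 0 then show ?case using is_form_const[of 1] by simp
next
  case (Suc n)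
  have "is_form (a + n*a) (\<lambda>v. f v * f v ^ n)"
    by (rule is_form_mult[OF Suc.prems(1) Suc.IH[OF Suc.prems(1) refl]]) simp
  then show ?case using Suc.prems by simp
qed

lemma is_form_sum: "finite S \<Longrightarrow> (\<And>i. i \<in> S \<Longrightarrow> is_form d (f i)) \<Longrightarrow> is_form d (\<lambda>v. \<Sum>i\<in>S. f i v)"
  by (induction S rule: finite_induct) (auto intro: is_form_0 is_form_add)

lemma is_form_inner: "is_form 1 (\<lambda>v. a \<bullet> v)"
proof -
  have "is_form 1 (\<lambda>v. a$1 * v$1 + a$2 * v$2 + a$3 * v$3)"
    by (intro is_form_add is_form_mult[OF is_form_const is_form_x1] is_form_mult[OF is_form_const is_form_x2] is_form_mult[OF is_form_const is_form_x3]) auto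
  then show ?thesis by (simp add: inner_vec_def sum_3)
qed

lemma is_form_comp: "is_form d h \<Longrightarrow> is_form d (\<lambda>v. h (M *v v))"
proof -
  assume "is_form d h"
  then obtain c where c: "\<And>v. h v = (\<Sum>ij\<in>TT d. c ij * mon d ij v)" unfolding is_form_alt by blast
  have row: "(M *v v)$k = row k M \<bullet> v" for k v
    by (simp add: matrix_vector_mult_def inner_vec_def row_def mult.commute)
  have "is_form d (\<lambda>v. \<Sum>ij\<in>TT d. c ij * mon d ij (M *v v))"
  proof (rule is_form_sum[OF finite_TT])
    fix ij assume ij: "ij \<in> TT d"
    show "is_form d (\<lambda>v. c ij * mon d ij (M *v v))"
    proof -
      obtain i j where ij': "ij = (i,j)" "i + j \<le> d" using ij by (cases ij) (auto simp: TT_def)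
      have "is_form (i + j + (d - i - j)) (\<lambda>v. (row 1 M \<bullet> v)^i * (row 2 M \<bullet> v)^j * (row 3 M \<bullet> v)^(d-i-j))"
        by (rule is_form_mult[OF is_form_mult]; (rule is_form_pow[OF is_form_inner])?) auto
      then have "is_form (0 + d) (\<lambda>v. c ij * ((row 1 M \<bullet> v)^i * (row 2 M \<bullet> v)^j * (row 3 M \<bullet> v)^(d-i-j)))"
        using ij' by (intro is_form_mult[OF is_form_const]) auto
      then show ?thesis unfolding mon_def row ij' by (simp add: mult.assoc)
    qed
  qed
  then show ?thesis by (simp add: c)
qed




definition cr :: "real^3 \<Rightarrow> real^3 \<Rightarrow> real^3" where
  "cr l m = vector [l$2*m$3 - l$3*m$2, l$3*m$1 - l$1*m$3, l$1*m$2 - l$2*m$1]"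

definition cols :: "real^3 \<Rightarrow> real^3 \<Rightarrow> real^3 \<Rightarrow> real^3^3" where
  "cols a b c = (\<chi> i j. (if j = 1 then a else if j = 2 then b else c) $ i)"

lemma inner3: "(x::real^3) \<bullet> y = x$1*y$1 + x$2*y$2 + x$3*y$3"
  by (simp add: inner_vec_def sum_3)

lemma cols_mult: "cols a b c *v v = v$1 *\<^sub>R a + v$2 *\<^sub>R b + v$3 *\<^sub>R c"
  by (simp add: cols_def matrix_vector_mult_def vec_eq_iff sum_3 mult.commute)

lemma mat_cols: "(\<sigma>::real^3^3) *v v = v$1 *\<^sub>R (\<sigma> *v axis 1 1) + v$2 *\<^sub>R (\<sigma> *v axis 2 1) + v$3 *\<^sub>R (\<sigma> *v axis 3 1)"
  by (simp add: matrix_vector_mult_def vec_eq_iff sum_3 axis_def algebra_simps)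

lemma inner_mat: "u \<bullet> ((\<sigma>::real^3^3) *v v) = v$1 * (u \<bullet> (\<sigma> *v axis 1 1)) + v$2 * (u \<bullet> (\<sigma> *v axis 2 1)) + v$3 * (u \<bullet> (\<sigma> *v axis 3 1))"
  by (subst mat_cols) (simp add: inner_add_right)

lemma invertibleI3: "(\<And>x. (\<sigma>::real^3^3) *v x = 0 \<Longrightarrow> x = 0) \<Longrightarrow> invertible \<sigma>"
  unfolding invertible_left_inverse matrix_left_invertible_ker by blast

lemma matrix_inv_props:
  assumes "invertible (\<sigma>::real^3^3)"
  shows "\<sigma> ** matrix_inv \<sigma> = mat 1" "matrix_inv \<sigma> ** \<sigma> = mat 1"
proof -
  have "\<exists>A'. \<sigma> ** A' = mat 1 \<and> A' ** \<sigma> = mat 1" using assms unfolding invertible_def .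
  from someI_ex[OF this] show "\<sigma> ** matrix_inv \<sigma> = mat 1" "matrix_inv \<sigma> ** \<sigma> = mat 1"
    unfolding matrix_inv_def by auto
qed

lemma inv_cancel1: "invertible \<sigma> \<Longrightarrow> (\<sigma>::real^3^3) *v (matrix_inv \<sigma> *v a) = a"
  by (simp add: matrix_vector_mul_assoc matrix_inv_props)
lemma inv_cancel2: "invertible \<sigma> \<Longrightarrow> matrix_inv \<sigma> *v ((\<sigma>::real^3^3) *v a) = a"
  by (simp add: matrix_vector_mul_assoc matrix_inv_props)

lemma act_comp: "invertible \<sigma> \<Longrightarrow> act \<sigma> (\<lambda>v. g ((\<sigma>::real^3^3) *v v)) = g"
  by (simp add: act_def inv_cancel1)

lemma act_eqD: "invertible \<sigma> \<Longrightarrow> act \<sigma> g0 = g \<Longrightarrow> g0 w = g ((\<sigma>::real^3^3) *v w)"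
  by (auto simp: act_def inv_cancel2)

lemma mat_nz: "invertible (\<sigma>::real^3^3) \<Longrightarrow> w \<noteq> 0 \<Longrightarrow> \<sigma> *v w \<noteq> 0"
  by (metis inv_cancel2 matrix_vector_mult_0_right)

lemma inner_mat_zero: 
  assumes "invertible (\<sigma>::real^3^3)" "\<And>w. u \<bullet> (\<sigma> *v w) = 0" shows "u = 0"
  using assms(2)[of "matrix_inv \<sigma> *v u"] by (simp add: inv_cancel1[OF assms(1)])

lemma sigma_exists:
  fixes l m :: "real^3"
  assumes D: "(l \<bullet> l) * (m \<bullet> m) - (l \<bullet> m)^2 \<noteq> 0"
  obtains \<sigma> :: "real^3^3" where "invertible \<sigma>" "\<And>v. l \<bullet> (\<sigma> *v v) = v$2" "\<And>v. m \<bullet> (\<sigma> *v v) = v$3"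
    "\<sigma> *v axis 1 1 = cr l m"
proof -
  define D where "D = (l \<bullet> l) * (m \<bullet> m) - (l \<bullet> m)^2"
  have D0: "D \<noteq> 0" using D D_def by simp
  define a2 where "a2 = ((m \<bullet> m)/D) *\<^sub>R l - ((l \<bullet> m)/D) *\<^sub>R m"
  define a3 where "a3 = ((l \<bullet> l)/D) *\<^sub>R m - ((l \<bullet> m)/D) *\<^sub>R l"
  define \<sigma> where "\<sigma> = cols (cr l m) a2 a3"
  have lc: "l \<bullet> cr l m = 0" "m \<bullet> cr l m = 0"
    by (simp_all add: cr_def inner3 algebra_simps)
  have cc: "cr l m \<bullet> cr l m = D"
    by (simp add: cr_def inner3 D_def power2_eq_square algebra_simps)
  have "l \<bullet> a2 = ((m \<bullet> m)*(l \<bullet> l) - (l \<bullet> m)*(l \<bullet> m))/D" "m \<bullet> a2 = ((m \<bullet> m)*(l \<bullet> m) - (l \<bullet> m)*(m \<bullet> m))/D"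
    "l \<bullet> a3 = ((l \<bullet> l)*(l \<bullet> m) - (l \<bullet> m)*(l \<bullet> l))/D" "m \<bullet> a3 = ((l \<bullet> l)*(m \<bullet> m) - (l \<bullet> m)*(l \<bullet> m))/D"
    by (simp_all add: a2_def a3_def inner_diff_right diff_divide_distrib inner_commute)
  then have la: "l \<bullet> a2 = 1" "m \<bullet> a2 = 0" "l \<bullet> a3 = 0" "m \<bullet> a3 = 1"
    using D0 by (simp_all add: D_def power2_eq_square mult.commute)
  have L: "l \<bullet> (\<sigma> *v v) = v$2" "m \<bullet> (\<sigma> *v v) = v$3" for v
    by (simp_all add: \<sigma>_def cols_mult inner_add_right lc la)
  have "invertible \<sigma>"
  proof (rule invertibleI3)
    fix x assume x: "\<sigma> *v x = 0"
    have "x$2 = 0" "x$3 = 0" using L[of x] x by auto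
    then have "x$1 *\<^sub>R cr l m = 0" using x by (simp add: \<sigma>_def cols_mult)
    then have "x$1 = 0" using cc D0 by auto
    then show "x = 0" using \<open>x$2 = 0\<close> \<open>x$3 = 0\<close> by (simp add: vec_eq_iff forall_3)
  qed
  moreover have "\<sigma> *v axis 1 1 = cr l m" by (simp add: \<sigma>_def cols_mult axis_def)
  ultimately show ?thesis using that L by blast
qed




definition lp :: "real^3 \<Rightarrow> real^3^3 \<Rightarrow> real poly" where
  "lp a \<sigma> = [: a \<bullet> (\<sigma> *v axis 1 1), a \<bullet> (\<sigma> *v axis 3 1), - (a \<bullet> (\<sigma> *v axis 2 1)) :]"

definition crv :: "real \<Rightarrow> real^3" where "crv s = vector [1, -(s^2), s]"

lemma crv_nz: "crv s \<noteq> 0"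
proof
  assume "crv s = 0" then have "crv s $ 1 = 0" by simp
  then show False by (simp add: crv_def)
qed

lemma poly_lp: "poly (lp a \<sigma>) s = a \<bullet> (\<sigma> *v crv s)"
  by (subst inner_mat) (simp add: lp_def crv_def algebra_simps power2_eq_square)

lemma lp_nz: "invertible \<sigma> \<Longrightarrow> a \<noteq> 0 \<Longrightarrow> lp a \<sigma> \<noteq> 0"
proof
  assume inv: "invertible \<sigma>" and a: "a \<noteq> 0" and z: "lp a \<sigma> = 0"
  then have "a \<bullet> (\<sigma> *v axis 1 1) = 0" "a \<bullet> (\<sigma> *v axis 2 1) = 0" "a \<bullet> (\<sigma> *v axis 3 1) = 0"
    by (auto simp: lp_def)
  then have "\<And>w. a \<bullet> (\<sigma> *v w) = 0" by (subst inner_mat) simp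
  then show False using inner_mat_zero[OF inv] a by blast
qed

lemma coeff_lp: "coeff (lp a \<sigma>) 0 = a \<bullet> (\<sigma> *v axis 1 1)" "coeff (lp a \<sigma>) 1 = a \<bullet> (\<sigma> *v axis 3 1)"
  by (simp_all add: lp_def)

lemma order_lp_le: "lp a \<sigma> \<noteq> 0 \<Longrightarrow> order 0 (lp a \<sigma>) \<le> 2"
proof -
  assume nz: "lp a \<sigma> \<noteq> 0"
  have "degree (lp a \<sigma>) \<le> 2" unfolding lp_def
    by (rule order.trans[OF degree_pCons_le]) (simp add: le_SucI degree_pCons_le)
  then show ?thesis using order_degree[OF nz, of 0] by linarith
qed

lemma order_ge1: "p \<noteq> 0 \<Longrightarrow> 1 \<le> order 0 p \<Longrightarrow> coeff p 0 = 0"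
  by (metis order_root poly_0_coeff_0 not_one_le_zero)

lemma order_ge2: "p \<noteq> 0 \<Longrightarrow> 2 \<le> order 0 p \<Longrightarrow> coeff p 0 = 0 \<and> coeff p 1 = 0"
proof -
  assume "p \<noteq> 0" "2 \<le> order 0 p"
  then have "[:-0, 1:] ^ 2 dvd p" using order_divides by blast
  then obtain r where "p = [:0,1:]^2 * r" by auto
  then show ?thesis by (simp add: power2_eq_square)
qed

lemma ord_bound:
  fixes p :: "real poly"
  assumes nz: "p \<noteq> 0" and b: "\<And>s. s \<noteq> 0 \<Longrightarrow> \<bar>s\<bar> < 1 \<Longrightarrow> \<bar>poly p s\<bar> \<le> C * \<bar>s\<bar>^N"
  shows "N \<le> order 0 p"
proof (rule ccontr)
  assume "\<not> N \<le> order 0 p"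
  define m where "m = order 0 p"
  have mN: "m < N" using \<open>\<not> N \<le> order 0 p\<close> m_def by simp
  obtain q where q: "p = [:- 0, 1:] ^ m * q" "\<not> [:- 0, 1:] dvd q"
    using order_decomp[OF nz, of 0] m_def by blast
  have q0: "poly q 0 \<noteq> 0" using q(2) by (simp add: dvd_iff_poly_eq_0)
  have pq: "poly p s = s^m * poly q s" for s by (simp add: q(1) poly_monom)
  have ev: "eventually (\<lambda>s. \<bar>poly q s\<bar> \<le> C * \<bar>s\<bar>^(N-m)) (at (0::real))"
  proof -
    have "eventually (\<lambda>s. s \<noteq> 0 \<and> \<bar>s\<bar> < 1) (at (0::real))"
      unfolding eventually_at by (intro exI[of _ 1]) auto
    then show ?thesis
    proof (rule eventually_mono)
      fix s :: real assume s: "s \<noteq> 0 \<and> \<bar>s\<bar> < 1"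
      have "\<bar>s\<bar>^m * \<bar>poly q s\<bar> \<le> \<bar>s\<bar>^m * (C * \<bar>s\<bar>^(N-m))"
      proof -
        have "\<bar>s\<bar>^m * \<bar>poly q s\<bar> = \<bar>poly p s\<bar>" by (simp add: pq abs_mult power_abs)
        also have "\<dots> \<le> C * \<bar>s\<bar>^N" using b s by auto
        also have "\<dots> = \<bar>s\<bar>^m * (C * \<bar>s\<bar>^(N-m))"
        proof -
          have "\<bar>s\<bar>^N = \<bar>s\<bar>^m * \<bar>s\<bar>^(N-m)" using mN by (simp add: power_add[symmetric])
          then show ?thesis by simp
        qed
        finally show ?thesis .
      qed
      moreover have "\<bar>s\<bar>^m > 0" using s by simp
      ultimately show "\<bar>poly q s\<bar> \<le> C * \<bar>s\<bar>^(N-m)" by (meson mult_le_cancel_left_pos)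
    qed
  qed
  have l1: "((\<lambda>s. \<bar>poly q s\<bar>) \<longlongrightarrow> \<bar>poly q 0\<bar>) (at (0::real))"
    using poly_isCont[where p=q and x=0] unfolding isCont_def by (intro tendsto_rabs)
  have l2: "((\<lambda>s. C * \<bar>s\<bar>^(N-m)) \<longlongrightarrow> C * \<bar>0\<bar>^(N-m)) (at (0::real))"
    by (intro tendsto_intros)
  have "\<bar>poly q 0\<bar> \<le> C * \<bar>0\<bar>^(N-m)"
    by (rule tendsto_le[OF _ l2 l1 ev]) simp
  then show False using q0 mN by (simp add: zero_power)
qed

lemma NEG:
  fixes \<sigma> :: "real^3^3"
  assumes inv: "invertible \<sigma>" and eps: "\<epsilon> > 0"
    and ineq: "\<And>w. w \<noteq> 0 \<Longrightarrow> \<epsilon> * (a \<bullet> (\<sigma> *v w))^2 * (b \<bullet> (\<sigma> *v w))^2 \<le> f w"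
    and cb: "\<And>s. s \<noteq> 0 \<Longrightarrow> \<bar>s\<bar> < 1 \<Longrightarrow> f (crv s) \<le> C * \<bar>s\<bar>^N"
    and nz: "lp a \<sigma> \<noteq> 0" "lp b \<sigma> \<noteq> 0"
  shows "N \<le> 2 * (order 0 (lp a \<sigma>) + order 0 (lp b \<sigma>))"
proof -
  define p where "p = (lp a \<sigma> * lp b \<sigma>) * (lp a \<sigma> * lp b \<sigma>)"
  have pnz: "p \<noteq> 0" using nz by (simp add: p_def)
  have "N \<le> order 0 p"
  proof (rule ord_bound[OF pnz, where C="C/\<epsilon>"])
    fix s :: real assume s: "s \<noteq> 0" "\<bar>s\<bar> < 1"
    have "poly p s = (a \<bullet> (\<sigma> *v crv s))^2 * (b \<bullet> (\<sigma> *v crv s))^2"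
      by (simp add: p_def poly_lp power2_eq_square)
    moreover have "\<epsilon> * ((a \<bullet> (\<sigma> *v crv s))^2 * (b \<bullet> (\<sigma> *v crv s))^2) \<le> C * \<bar>s\<bar>^N"
      using ineq[OF crv_nz, of s] cb[OF s] by (simp add: mult.assoc)
    ultimately show "\<bar>poly p s\<bar> \<le> C / \<epsilon> * \<bar>s\<bar>^N"
      using eps by (simp add: field_simps)
  qed
  also have "order 0 p = 2 * (order 0 (lp a \<sigma>) + order 0 (lp b \<sigma>))"
    using pnz nz by (simp add: p_def order_mult)
  finally show ?thesis .
qed




lemma quad_expand:
  assumes "is_form 2 H"
  obtains a b c d e f where "\<And>v. H v = a*(v$1)^2 + b* v$1* v$2 + c* v$1* v$3 + d*(v$2)^2 + e* v$2* v$3 + f*(v$3)^2"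
proof -
  obtain cc where cc: "\<And>v. H v = (\<Sum>i\<le>2. \<Sum>j\<le>2 - i. cc i j * (v$1)^i * (v$2)^j * (v$3)^(2 - i - j))"
    using assms unfolding is_form_def by blast
  have "H v = cc 2 0*(v$1)^2 + cc 1 1* v$1* v$2 + cc 1 0* v$1* v$3 + cc 0 2*(v$2)^2 + cc 0 1* v$2* v$3 + cc 0 0*(v$3)^2" for v
    unfolding cc by (simp add: numeral_2_eq_2 atMost_Suc algebra_simps)
  then show ?thesis using that by blast
qed

lemma lin_nonneg: assumes "\<And>t::real. 0 \<le> b*t + d" shows "b = 0"
proof (rule ccontr)
  assume b: "b \<noteq> 0"
  have "0 \<le> b * (-(\<bar>d\<bar>+1)/b) + d" by (rule assms)
  also have "\<dots> = -(\<bar>d\<bar>+1) + d" using b by simp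
  finally show False by simp
qed

lemma absprod: "\<bar>(y::real)*z\<bar> \<le> y^2 + z^2"
proof -
  have "0 \<le> (\<bar>y\<bar> - \<bar>z\<bar>)^2" by simp
  then have "2*(\<bar>y\<bar>*\<bar>z\<bar>) \<le> \<bar>y\<bar>^2 + \<bar>z\<bar>^2" by (simp add: power2_eq_square algebra_simps)
  moreover have "0 \<le> \<bar>y\<bar>*\<bar>z\<bar>" by simp
  ultimately show ?thesis using power2_abs[of y] power2_abs[of z] unfolding abs_mult by linarith
qed

lemma termb: "(e::real) * (y * z) \<le> \<bar>e\<bar> * (y^2 + z^2)"
proof -
  have "e * (y*z) \<le> \<bar>e\<bar> * \<bar>y*z\<bar>" by (metis abs_ge_self abs_mult)
  also have "\<dots> \<le> \<bar>e\<bar> * (y^2+z^2)" by (rule mult_left_mono[OF absprod]) simp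
  finally show ?thesis .
qed

lemma vnz: "v$i \<noteq> 0 \<Longrightarrow> (v::real^3) \<noteq> 0" by auto

lemma quad1:
  assumes "is_form 2 H" "psd H" "H (axis 1 1) = 0"
  shows "\<exists>C\<ge>0. \<forall>w. H w \<le> C * ((w$2)^2 + (w$3)^2)"
proof -
  obtain a b c d e f where H: "\<And>v. H v = a*(v$1)^2 + b* v$1* v$2 + c* v$1* v$3 + d*(v$2)^2 + e* v$2* v$3 + f*(v$3)^2"
    using quad_expand[OF assms(1)] by blast
  have a: "a = 0" using assms(3) H[of "axis 1 1"] by (simp add: axis_def)
  have "b = 0"
  proof (rule lin_nonneg)
    fix t
    have "0 \<le> H (vector [t,1,0])" using assms(2) vnz[of "vector [t,1,0]" 2] unfolding psd_def by simp
    then show "0 \<le> b*t + d" using H[of "vector [t,1,0]"] a by simp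
  qed
  moreover have "c = 0"
  proof (rule lin_nonneg)
    fix t
    have "0 \<le> H (vector [t,0,1])" using assms(2) vnz[of "vector [t,0,1]" 3] unfolding psd_def by simp
    then show "0 \<le> c*t + f" using H[of "vector [t,0,1]"] a by simp
  qed
  ultimately have Hw: "H w = d*(w$2)^2 + e*(w$2*w$3) + f*(w$3)^2" for w using H a by (simp add: mult.assoc)
  show ?thesis
  proof (intro exI[of _ "\<bar>d\<bar>+\<bar>e\<bar>+\<bar>f\<bar>"] conjI allI)
    fix w :: "real^3"
    have "d*(w$2)^2 \<le> \<bar>d\<bar>*((w$2)^2 + (w$3)^2)"
      by (rule order.trans[OF _ mult_left_mono[of "(w$2)^2"]]) (auto simp: abs_ge_self mult_right_mono)
    moreover have "f*(w$3)^2 \<le> \<bar>f\<bar>*((w$2)^2 + (w$3)^2)"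
      by (rule order.trans[OF _ mult_left_mono[of "(w$3)^2"]]) (auto simp: abs_ge_self mult_right_mono)
    moreover have "e*(w$2*w$3) \<le> \<bar>e\<bar>*((w$2)^2 + (w$3)^2)" by (rule termb)
    ultimately show "H w \<le> (\<bar>d\<bar>+\<bar>e\<bar>+\<bar>f\<bar>) * ((w$2)^2 + (w$3)^2)"
      unfolding Hw by (simp add: distrib_right)
  qed simp
qed

lemma quad2:
  assumes "is_form 2 H" "psd H" "\<And>w. w$2 = 0 \<Longrightarrow> H w = 0"
  shows "\<exists>C\<ge>0. \<forall>w. H w \<le> C * (w$2)^2"
proof -
  obtain a b c d e f where H: "\<And>v. H v = a*(v$1)^2 + b* v$1* v$2 + c* v$1* v$3 + d*(v$2)^2 + e* v$2* v$3 + f*(v$3)^2"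
    using quad_expand[OF assms(1)] by blast
  have a: "a = 0" using assms(3)[of "vector [1,0,0]"] H[of "vector [1,0,0]"] by simp
  have f: "f = 0" using assms(3)[of "vector [0,0,1]"] H[of "vector [0,0,1]"] by simp
  have c: "c = 0" using assms(3)[of "vector [1,0,1]"] H[of "vector [1,0,1]"] a f by simp
  have "b = 0"
  proof (rule lin_nonneg)
    fix t
    have "0 \<le> H (vector [t,1,0])" using assms(2) vnz[of "vector [t,1,0]" 2] unfolding psd_def by simp
    then show "0 \<le> b*t + d" using H a f c by simp
  qed
  moreover have "e = 0"
  proof (rule lin_nonneg)
    fix t
    have "0 \<le> H (vector [0,1,t])" using assms(2) vnz[of "vector [0,1,t]" 2] unfolding psd_def by simp
    then show "0 \<le> e*t + d" using H a f c by (simp add: algebra_simps)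
  qed
  ultimately have Hw: "H w = d*(w$2)^2" for w using H a c f by simp
  show ?thesis
    by (intro exI[of _ "\<bar>d\<bar>"] conjI allI) (auto simp: Hw abs_ge_self mult_right_mono)
qed

lemma quad3:
  assumes "is_form 2 H" "psd H" "\<And>w. w$3 = 0 \<Longrightarrow> H w = 0"
  shows "\<exists>C\<ge>0. \<forall>w. H w \<le> C * (w$3)^2"
proof -
  obtain a b c d e f where H: "\<And>v. H v = a*(v$1)^2 + b* v$1* v$2 + c* v$1* v$3 + d*(v$2)^2 + e* v$2* v$3 + f*(v$3)^2"
    using quad_expand[OF assms(1)] by blast
  have a: "a = 0" using assms(3)[of "vector [1,0,0]"] H[of "vector [1,0,0]"] by simp
  have d: "d = 0" using assms(3)[of "vector [0,1,0]"] H[of "vector [0,1,0]"] by simp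
  have b: "b = 0" using assms(3)[of "vector [1,1,0]"] H[of "vector [1,1,0]"] a d by simp
  have "c = 0"
  proof (rule lin_nonneg)
    fix t
    have "0 \<le> H (vector [t,0,1])" using assms(2) vnz[of "vector [t,0,1]" 3] unfolding psd_def by simp
    then show "0 \<le> c*t + f" using H a b d by simp
  qed
  moreover have "e = 0"
  proof (rule lin_nonneg)
    fix t
    have "0 \<le> H (vector [0,t,1])" using assms(2) vnz[of "vector [0,t,1]" 3] unfolding psd_def by simp
    then show "0 \<le> e*t + f" using H a b d by (simp add: algebra_simps)
  qed
  ultimately have Hw: "H w = f*(w$3)^2" for w using H a b d by simp
  show ?thesis
    by (intro exI[of _ "\<bar>f\<bar>"] conjI allI) (auto simp: Hw abs_ge_self mult_right_mono)
qed

lemma POS: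
  fixes \<sigma> :: "real^3^3"
  assumes inv: "invertible \<sigma>" and ff: "is_form 4 f"
    and G: "\<And>g. g \<in> F \<Longrightarrow> is_form 4 (\<lambda>v. g (\<sigma> *v v)) \<and> (\<forall>w. w \<noteq> 0 \<longrightarrow> 0 \<le> g (\<sigma> *v w))
         \<and> (\<exists>\<epsilon>>0. \<forall>w. w \<noteq> 0 \<longrightarrow> \<epsilon> * g (\<sigma> *v w) \<le> f w)"
  shows "subface F (face_of_form f)"
  unfolding subface_def
proof (intro exI[of _ \<sigma>] conjI subsetI inv)
  fix g assume g: "g \<in> F"
  define g0 where "g0 = (\<lambda>v. g (\<sigma> *v v))"
  obtain \<epsilon> where e: "\<epsilon> > 0" "\<forall>w. w \<noteq> 0 \<longrightarrow> \<epsilon> * g0 w \<le> f w"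
    using G[OF g] unfolding g0_def by blast
  have "g0 \<in> face_of_form f"
    unfolding face_of_form_def P34_def psd_def mem_Collect_eq
  proof (intro conjI exI[of _ \<epsilon>] e(1))
    show "is_form 4 g0" using G[OF g] unfolding g0_def by blast
    show "\<forall>v. v \<noteq> 0 \<longrightarrow> 0 \<le> g0 v" using G[OF g] unfolding g0_def by blast
    show "is_form 4 (\<lambda>v. f v - \<epsilon> * g0 v)"
      by (intro is_form_diff ff is_form_mult[OF is_form_const]) (use G[OF g] in \<open>auto simp: g0_def\<close>)
    show "\<forall>v. v \<noteq> 0 \<longrightarrow> 0 \<le> f v - \<epsilon> * g0 v" using e by auto
  qed
  moreover have "g = act \<sigma> g0" unfolding g0_def using act_comp[OF inv] by simp
  ultimately show "g \<in> act \<sigma> ` face_of_form f" by blast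
qed

lemma extractF:
  fixes \<sigma> :: "real^3^3"
  assumes inv: "invertible \<sigma>" and sub: "F \<subseteq> act \<sigma> ` face_of_form f" and g: "g \<in> F"
  shows "\<exists>\<epsilon>>0. \<forall>w. w \<noteq> 0 \<longrightarrow> \<epsilon> * g (\<sigma> *v w) \<le> f w"
proof -
  obtain g0 where g0: "g0 \<in> face_of_form f" "g = act \<sigma> g0" using sub g by blast
  then obtain \<epsilon> where e: "\<epsilon> > 0" "(\<lambda>v. f v - \<epsilon> * g0 v) \<in> P34" unfolding face_of_form_def by blast
  have "\<forall>w. w \<noteq> 0 \<longrightarrow> \<epsilon> * g (\<sigma> *v w) \<le> f w"
  proof (intro allI impI)
    fix w :: "real^3" assume "w \<noteq> 0"
    then have "0 \<le> f w - \<epsilon> * g0 w" using e(2) unfolding P34_def psd_def by blast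
    moreover have "g0 w = g (\<sigma> *v w)" using act_eqD[OF inv g0(2)[symmetric]] .
    ultimately show "\<epsilon> * g (\<sigma> *v w) \<le> f w" by simp
  qed
  then show ?thesis using e(1) by blast
qed

lemma FlU_elem:
  assumes "g \<in> F_lU l U"
  obtains h where "g = (\<lambda>v. (l \<bullet> v)^2 * h v)" "is_form 2 h" "psd h" "\<forall>u\<in>U. h u = 0"
  using assms unfolding F_lU_def by blast

lemma FlU_intro:
  assumes "is_form 2 h" "psd h" "\<forall>u\<in>U. h u = 0"
  shows "(\<lambda>v. (l \<bullet> v)^2 * h v) \<in> F_lU l U"
  using assms unfolding F_lU_def by blast

lemma FlU_sq: "(\<forall>u\<in>U. a \<bullet> u = 0) \<Longrightarrow> (\<lambda>v. (l \<bullet> v)^2 * (a \<bullet> v)^2) \<in> F_lU l U"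
  by (rule FlU_intro) (auto simp: psd_def intro: is_form_pow[OF is_form_inner])

lemma pos_part:
  fixes \<sigma> :: "real^3^3"
  assumes inv: "invertible \<sigma>" and h: "is_form 2 h" "psd h"
  shows "is_form 4 (\<lambda>v. (l \<bullet> (\<sigma> *v v))^2 * h (\<sigma> *v v))"
    "w \<noteq> 0 \<Longrightarrow> 0 \<le> (l \<bullet> (\<sigma> *v w))^2 * h (\<sigma> *v w)"
    "is_form 2 (\<lambda>v. h (\<sigma> *v v))" "psd (\<lambda>v. h (\<sigma> *v v))"
proof -
  have "is_form 4 (\<lambda>v. (l \<bullet> v)^2 * h v)"
    by (rule is_form_mult[OF is_form_pow[OF is_form_inner] h(1)]) auto
  from is_form_comp[OF this] show "is_form 4 (\<lambda>v. (l \<bullet> (\<sigma> *v v))^2 * h (\<sigma> *v v))" .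
  show "is_form 2 (\<lambda>v. h (\<sigma> *v v))" using is_form_comp[OF h(1)] .
  show "psd (\<lambda>v. h (\<sigma> *v v))" using h(2) mat_nz[OF inv] unfolding psd_def by blast
  then show "w \<noteq> 0 \<Longrightarrow> 0 \<le> (l \<bullet> (\<sigma> *v w))^2 * h (\<sigma> *v w)" unfolding psd_def by simp
qed




abbreviation "f1 \<equiv> (\<lambda>v::real^3. (v$1 * v$2 + (v$3)^2)^2 + (v$2)^2 * (v$3)^2 + (v$2)^4)"
abbreviation "f2 \<equiv> (\<lambda>v::real^3. (v$1 * v$2 + (v$3)^2)^2 + (v$2)^4)"
abbreviation "f3 \<equiv> (\<lambda>v::real^3. (v$1 * v$2 + (v$3)^2)^2 + (v$2)^2 * (v$3)^2)"

lemma form_q: "is_form 2 (\<lambda>v. v$1 * v$2 + (v$3)^2)"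
  by (intro is_form_add is_form_mult[OF is_form_x1 is_form_x2] is_form_pow[OF is_form_x3]) auto
lemma form_f1: "is_form 4 f1"
  by (intro is_form_add is_form_pow[OF form_q] is_form_mult[OF is_form_pow[OF is_form_x2] is_form_pow[OF is_form_x3]] is_form_pow[OF is_form_x2]) auto
lemma form_f2: "is_form 4 f2"
  by (intro is_form_add is_form_pow[OF form_q] is_form_pow[OF is_form_x2]) auto
lemma form_f3: "is_form 4 f3"
  by (intro is_form_add is_form_pow[OF form_q] is_form_mult[OF is_form_pow[OF is_form_x2] is_form_pow[OF is_form_x3]]) auto

lemma inner_cr: "l \<bullet> cr l m = 0" "m \<bullet> cr l m = 0"
  by (simp_all add: cr_def inner3 algebra_simps)
lemma cr_norm: "cr l m \<bullet> cr l m = (l \<bullet> l) * (m \<bullet> m) - (l \<bullet> m)^2"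
  by (simp add: cr_def inner3 power2_eq_square algebra_simps)
lemma cr_cr: "cr l (cr l m) = (l \<bullet> m) *\<^sub>R l - (l \<bullet> l) *\<^sub>R m"
  by (simp add: cr_def inner3 vec_eq_iff forall_3 algebra_simps)

lemma bound_lemma:
  fixes X A B C :: real
  assumes "0 \<le> A" "X \<le> C * A" "0 \<le> C" "A \<le> B"
  shows "(1/(C+1)) * X \<le> B"
proof -
  have "X \<le> (C+1) * A" using assms by (simp add: distrib_right)
  then have "X / (C+1) \<le> A" using assms(3) by (simp add: divide_le_eq mult.commute)
  then show ?thesis using assms(4) by simp
qed

lemma sigma_p:
  fixes l p :: "real^3"
  assumes "l \<noteq> 0" "p \<noteq> 0" "l \<bullet> p = 0"
  obtains \<sigma> :: "real^3^3" where "invertible \<sigma>" "\<And>v. l \<bullet> (\<sigma> *v v) = v$2"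
    "\<sigma> *v axis 1 1 = (- (l \<bullet> l)) *\<^sub>R p"
proof -
  have "(l \<bullet> l) * (cr l p \<bullet> cr l p) - (l \<bullet> cr l p)^2 \<noteq> 0"
    using assms by (simp add: cr_norm inner_cr)
  then obtain \<sigma> :: "real^3^3" where "invertible \<sigma>" "\<And>v. l \<bullet> (\<sigma> *v v) = v$2" "\<sigma> *v axis 1 1 = cr l (cr l p)"
    by (rule sigma_exists) blast
  moreover have "cr l (cr l p) = (- (l \<bullet> l)) *\<^sub>R p" using assms by (simp add: cr_cr)
  ultimately show ?thesis using that by simp
qed

lemma claim1:
  fixes l p :: "real^3"
  assumes "l \<noteq> 0" "p \<noteq> 0" "l \<bullet> p = 0"
  shows "subface (F_lU l (proj_point p)) FT1s"
proof -
  obtain \<sigma> :: "real^3^3" where inv: "invertible \<sigma>" and L: "\<And>v. l \<bullet> (\<sigma> *v v) = v$2"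
    and e1: "\<sigma> *v axis 1 1 = (- (l \<bullet> l)) *\<^sub>R p"
    using sigma_p[OF assms] by blast
  show ?thesis unfolding FT1s_def
  proof (rule POS[OF inv form_f1])
    fix g assume "g \<in> F_lU l (proj_point p)"
    then obtain h where g: "g = (\<lambda>v. (l \<bullet> v)^2 * h v)" and h: "is_form 2 h" "psd h" "\<forall>u\<in>proj_point p. h u = 0"
      by (rule FlU_elem)
    have "(- (l \<bullet> l)) *\<^sub>R p \<in> proj_point p" unfolding proj_point_def
      by (intro span_scale span_base) simp
    then have h0: "h (\<sigma> *v axis 1 1) = 0" unfolding e1 using h(3) by blast
    obtain C where C: "C \<ge> 0" "\<forall>w. h (\<sigma> *v w) \<le> C * ((w$2)^2 + (w$3)^2)"
      using quad1[OF pos_part(3,4)[OF inv h(1,2)]] h0 by auto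
    show "is_form 4 (\<lambda>v. g (\<sigma> *v v)) \<and> (\<forall>w. w \<noteq> 0 \<longrightarrow> 0 \<le> g (\<sigma> *v w))
         \<and> (\<exists>\<epsilon>>0. \<forall>w. w \<noteq> 0 \<longrightarrow> \<epsilon> * g (\<sigma> *v w) \<le> f1 w)"
    proof (intro conjI allI impI exI[of _ "1/(C+1)"])
      show "is_form 4 (\<lambda>v. g (\<sigma> *v v))" using pos_part(1)[OF inv h(1,2)] g by simp
      show "0 \<le> g (\<sigma> *v w)" if "w \<noteq> 0" for w using pos_part(2)[OF inv h(1,2) that] g by simp
      show "0 < 1/(C+1)" using C by simp
      fix w :: "real^3"
      show "1/(C+1) * g (\<sigma> *v w) \<le> f1 w"
      proof (rule bound_lemma[where A = "(w$2)^2 * ((w$2)^2 + (w$3)^2)"])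
        show "0 \<le> (w$2)^2 * ((w$2)^2 + (w$3)^2)" by simp
        show "g (\<sigma> *v w) \<le> C * ((w$2)^2 * ((w$2)^2 + (w$3)^2))"
          using mult_left_mono[OF spec[OF C(2), of w], of "(w$2)^2"] by (simp add: g L algebra_simps)
        show "0 \<le> C" by fact
        have "(w$2)^2 * ((w$2)^2 + (w$3)^2) = (w$2)^2 * (w$3)^2 + (w$2)^4"
          by (simp add: algebra_simps power4_eq_xxxx power2_eq_square)
        then show "(w$2)^2 * ((w$2)^2 + (w$3)^2) \<le> f1 w"
          using zero_le_power2[of "w$1 * w$2 + (w$3)^2"] by linarith
      qed
    qed
  qed
qed

lemma claim3:
  fixes l p :: "real^3"
  assumes "l \<noteq> 0" "p \<noteq> 0" "l \<bullet> p = 0"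
  shows "subface (F_lU l (proj_line l)) FT1ss"
proof -
  obtain \<sigma> :: "real^3^3" where inv: "invertible \<sigma>" and L: "\<And>v. l \<bullet> (\<sigma> *v v) = v$2"
    using sigma_p[OF assms] by blast
  show ?thesis unfolding FT1ss_def
  proof (rule POS[OF inv form_f2])
    fix g assume "g \<in> F_lU l (proj_line l)"
    then obtain h where g: "g = (\<lambda>v. (l \<bullet> v)^2 * h v)" and h: "is_form 2 h" "psd h" "\<forall>u\<in>proj_line l. h u = 0"
      by (rule FlU_elem)
    have h0: "h (\<sigma> *v w) = 0" if "w$2 = 0" for w
      using h(3) L[of w] that unfolding proj_line_def by auto
    obtain C where C: "C \<ge> 0" "\<forall>w. h (\<sigma> *v w) \<le> C * (w$2)^2"
      using quad2[OF pos_part(3,4)[OF inv h(1,2)]] h0 by auto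
    show "is_form 4 (\<lambda>v. g (\<sigma> *v v)) \<and> (\<forall>w. w \<noteq> 0 \<longrightarrow> 0 \<le> g (\<sigma> *v w))
         \<and> (\<exists>\<epsilon>>0. \<forall>w. w \<noteq> 0 \<longrightarrow> \<epsilon> * g (\<sigma> *v w) \<le> f2 w)"
    proof (intro conjI allI impI exI[of _ "1/(C+1)"])
      show "is_form 4 (\<lambda>v. g (\<sigma> *v v))" using pos_part(1)[OF inv h(1,2)] g by simp
      show "0 \<le> g (\<sigma> *v w)" if "w \<noteq> 0" for w using pos_part(2)[OF inv h(1,2) that] g by simp
      show "0 < 1/(C+1)" using C by simp
      fix w :: "real^3"
      show "1/(C+1) * g (\<sigma> *v w) \<le> f2 w"
      proof (rule bound_lemma[where A = "(w$2)^2 * (w$2)^2"])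
        show "0 \<le> (w$2)^2 * (w$2)^2" by simp
        show "g (\<sigma> *v w) \<le> C * ((w$2)^2 * (w$2)^2)"
          using mult_left_mono[OF spec[OF C(2), of w], of "(w$2)^2"] by (simp add: g L algebra_simps)
        show "0 \<le> C" by fact
        have "(w$2)^2 * (w$2)^2 = (w$2)^4"
          by (simp add: power4_eq_xxxx power2_eq_square)
        then show "(w$2)^2 * (w$2)^2 \<le> f2 w"
          using zero_le_power2[of "w$1 * w$2 + (w$3)^2"] by linarith
      qed
    qed
  qed
qed

lemma Dnz:
  fixes l k :: "real^3"
  assumes "l \<noteq> 0" "\<not> (\<exists>c. k = c *\<^sub>R l)"
  shows "(l \<bullet> l) * (k \<bullet> k) - (l \<bullet> k)^2 \<noteq> 0"
proof
  assume D: "(l \<bullet> l) * (k \<bullet> k) - (l \<bullet> k)^2 = 0"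
  define x where "x = (l \<bullet> l) *\<^sub>R k - (l \<bullet> k) *\<^sub>R l"
  have "x \<bullet> x = (l \<bullet> l) * ((l \<bullet> l) * (k \<bullet> k) - (l \<bullet> k)^2)"
    by (simp add: x_def inner_diff_left inner_diff_right power2_eq_square inner_commute algebra_simps)
  then have "x = 0" using D by simp
  then have kk: "(l \<bullet> l) *\<^sub>R k = (l \<bullet> k) *\<^sub>R l" by (simp add: x_def)
  have "k = (1/(l \<bullet> l)) *\<^sub>R ((l \<bullet> l) *\<^sub>R k)" using assms(1) by simp
  also have "\<dots> = ((l \<bullet> k) / (l \<bullet> l)) *\<^sub>R l" unfolding kk by simp
  finally have "k = ((l \<bullet> k) / (l \<bullet> l)) *\<^sub>R l" .
  then show False using assms(2) by blast
qed

lemma claim5: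
  fixes l k :: "real^3"
  assumes "l \<noteq> 0" "\<not> (\<exists>c. k = c *\<^sub>R l)"
  shows "subface (F_lU l (proj_line k)) FT2s"
proof -
  obtain \<sigma> :: "real^3^3" where inv: "invertible \<sigma>" and L: "\<And>v. l \<bullet> (\<sigma> *v v) = v$2"
    and K: "\<And>v. k \<bullet> (\<sigma> *v v) = v$3"
    using sigma_exists[OF Dnz[OF assms]] by blast
  show ?thesis unfolding FT2s_def
  proof (rule POS[OF inv form_f3])
    fix g assume "g \<in> F_lU l (proj_line k)"
    then obtain h where g: "g = (\<lambda>v. (l \<bullet> v)^2 * h v)" and h: "is_form 2 h" "psd h" "\<forall>u\<in>proj_line k. h u = 0"
      by (rule FlU_elem)
    have h0: "h (\<sigma> *v w) = 0" if "w$3 = 0" for w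
      using h(3) K[of w] that unfolding proj_line_def by auto
    obtain C where C: "C \<ge> 0" "\<forall>w. h (\<sigma> *v w) \<le> C * (w$3)^2"
      using quad3[OF pos_part(3,4)[OF inv h(1,2)]] h0 by auto
    show "is_form 4 (\<lambda>v. g (\<sigma> *v v)) \<and> (\<forall>w. w \<noteq> 0 \<longrightarrow> 0 \<le> g (\<sigma> *v w))
         \<and> (\<exists>\<epsilon>>0. \<forall>w. w \<noteq> 0 \<longrightarrow> \<epsilon> * g (\<sigma> *v w) \<le> f3 w)"
    proof (intro conjI allI impI exI[of _ "1/(C+1)"])
      show "is_form 4 (\<lambda>v. g (\<sigma> *v v))" using pos_part(1)[OF inv h(1,2)] g by simp
      show "0 \<le> g (\<sigma> *v w)" if "w \<noteq> 0" for w using pos_part(2)[OF inv h(1,2) that] g by simp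
      show "0 < 1/(C+1)" using C by simp
      fix w :: "real^3"
      show "1/(C+1) * g (\<sigma> *v w) \<le> f3 w"
      proof (rule bound_lemma[where A = "(w$2)^2 * (w$3)^2"])
        show "0 \<le> (w$2)^2 * (w$3)^2" by simp
        show "g (\<sigma> *v w) \<le> C * ((w$2)^2 * (w$3)^2)"
          using mult_left_mono[OF spec[OF C(2), of w], of "(w$2)^2"] by (simp add: g L algebra_simps)
        show "0 \<le> C" by fact
        show "(w$2)^2 * (w$3)^2 \<le> f3 w"
          using zero_le_power2[of "w$1 * w$2 + (w$3)^2"] by linarith
      qed
    qed
  qed
qed

definition sQ :: "real^3^3" where
  "sQ = cols (vector [1/2, -1/2, 0]) (vector [1/2, 1/2, 0]) (vector [0, 0, 1])"

lemma sQ_comp: "(sQ *v w)$1 = w$1/2 + w$2/2" "(sQ *v w)$2 = - (w$1/2) + w$2/2" "(sQ *v w)$3 = w$3"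
  by (simp_all add: sQ_def cols_mult)

lemma sQ_inv: "invertible sQ"
proof (rule invertibleI3)
  fix x assume "sQ *v x = 0"
  then have "(sQ *v x)$1 = 0" "(sQ *v x)$2 = 0" "(sQ *v x)$3 = 0" by simp_all
  then have "x$1 = 0" "x$2 = 0" "x$3 = 0" unfolding sQ_comp by linarith+
  then show "x = 0" by (simp add: vec_eq_iff forall_3)
qed

lemma claimQ:
  assumes ff: "is_form 4 f" and fb: "\<And>w. (w$1 * w$2 + (w$3)^2)^2 \<le> f w"
  shows "subface FQ (face_of_form f)"
proof (rule POS[OF sQ_inv ff])
  fix g assume "g \<in> FQ"
  then obtain \<epsilon> where g: "is_form 4 g" "psd g" "\<epsilon> > 0"
    and e: "psd (\<lambda>v. ((v$1)^2 - (v$2)^2 + (v$3)^2)^2 - \<epsilon> * g v)"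
    unfolding FQ_def face_of_form_def P34_def by blast
  show "is_form 4 (\<lambda>v. g (sQ *v v)) \<and> (\<forall>w. w \<noteq> 0 \<longrightarrow> 0 \<le> g (sQ *v w))
         \<and> (\<exists>\<epsilon>>0. \<forall>w. w \<noteq> 0 \<longrightarrow> \<epsilon> * g (sQ *v w) \<le> f w)"
  proof (intro conjI allI impI exI[of _ \<epsilon>])
    show "is_form 4 (\<lambda>v. g (sQ *v v))" by (rule is_form_comp[OF g(1)])
    show "0 \<le> g (sQ *v w)" if "w \<noteq> 0" for w using g(2) mat_nz[OF sQ_inv that] unfolding psd_def by blast
    show "0 < \<epsilon>" by fact
    fix w :: "real^3" assume w: "w \<noteq> 0"
    have "\<epsilon> * g (sQ *v w) \<le> (((sQ *v w)$1)^2 - ((sQ *v w)$2)^2 + ((sQ *v w)$3)^2)^2"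
      using e[unfolded psd_def, rule_format, OF mat_nz[OF sQ_inv w]] by simp
    also have "((sQ *v w)$1)^2 - ((sQ *v w)$2)^2 + ((sQ *v w)$3)^2 = w$1 * w$2 + (w$3)^2"
      unfolding sQ_comp by (simp add: power2_eq_square algebra_simps)
    also have "(w$1 * w$2 + (w$3)^2)^2 \<le> f w" by (rule fb)
    finally show "\<epsilon> * g (sQ *v w) \<le> f w" .
  qed
qed

lemma claimQ1: "subface FQ FT1s"
  unfolding FT1s_def by (rule claimQ[OF form_f1]) simp
lemma claimQ2: "subface FQ FT1ss"
  unfolding FT1ss_def by (rule claimQ[OF form_f2]) simp
lemma claimQ3: "subface FQ FT2s"
  unfolding FT2s_def by (rule claimQ[OF form_f3]) simp




lemma crv1: "s \<noteq> 0 \<Longrightarrow> \<bar>s\<bar> < 1 \<Longrightarrow> f1 (crv s) \<le> 2 * \<bar>s\<bar>^6"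
proof -
  assume "\<bar>s\<bar> < 1"
  then have "s^2 \<le> 1" by (simp add: abs_square_le_1)
  then have "s^6 * s^2 \<le> s^6 * 1" by (intro mult_left_mono) (auto simp: zero_le_even_power)
  moreover have "f1 (crv s) = s^6 + s^6 * s^2" by (simp add: crv_def power2_eq_square power4_eq_xxxx algebra_simps eval_nat_numeral)
  moreover have "\<bar>s\<bar>^6 = s^6" by (simp add: power_even_abs)
  ultimately show ?thesis by simp
qed

lemma crv2: "f2 (crv s) \<le> 1 * \<bar>s\<bar>^8"
  by (simp add: crv_def power2_eq_square power4_eq_xxxx algebra_simps eval_nat_numeral power_even_abs)

lemma crv3: "f3 (crv s) \<le> 1 * \<bar>s\<bar>^6"
  by (simp add: crv_def power2_eq_square power4_eq_xxxx algebra_simps eval_nat_numeral power_even_abs)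

lemma claim6:
  fixes l :: "real^3"
  assumes l: "l \<noteq> 0"
  shows "\<not> subface (F_lU l (proj_line l)) FT2s"
proof
  assume "subface (F_lU l (proj_line l)) FT2s"
  then obtain \<sigma> :: "real^3^3" where inv: "invertible \<sigma>" and sub: "F_lU l (proj_line l) \<subseteq> act \<sigma> ` face_of_form f3"
    unfolding subface_def FT2s_def by blast
  have "(\<lambda>v. (l \<bullet> v)^2 * (l \<bullet> v)^2) \<in> F_lU l (proj_line l)"
    by (rule FlU_sq) (simp add: proj_line_def)
  from extractF[OF inv sub this] obtain \<epsilon> where e: "\<epsilon> > 0"
    and ineq: "\<And>w. w \<noteq> 0 \<Longrightarrow> \<epsilon> * ((l \<bullet> (\<sigma> *v w))^2 * (l \<bullet> (\<sigma> *v w))^2) \<le> f3 w" by blast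
  have nz: "lp l \<sigma> \<noteq> 0" by (rule lp_nz[OF inv l])
  have "6 \<le> 2 * (order 0 (lp l \<sigma>) + order 0 (lp l \<sigma>))"
    by (rule NEG[OF inv e _ crv3 nz nz]) (use ineq in \<open>simp add: mult.assoc\<close>)
  then have "2 \<le> order 0 (lp l \<sigma>)" by presburger
  from order_ge2[OF nz this] have c13: "l \<bullet> (\<sigma> *v axis 1 1) = 0" "l \<bullet> (\<sigma> *v axis 3 1) = 0"
    by (simp_all add: lp_def)
  have "axis 2 1 \<noteq> (0::real^3)" by (simp add: axis_eq_0_iff)
  from ineq[OF this] have "\<epsilon> * ((l \<bullet> (\<sigma> *v axis 2 1))^2 * (l \<bullet> (\<sigma> *v axis 2 1))^2) \<le> 0"
    by (simp add: axis_def)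
  then have "(l \<bullet> (\<sigma> *v axis 2 1))^2 * (l \<bullet> (\<sigma> *v axis 2 1))^2 \<le> 0" using e
    by (simp add: mult_le_0_iff)
  then have "l \<bullet> (\<sigma> *v axis 2 1) = 0"
    by (metis mult_eq_0_iff power2_eq_square order_antisym zero_le_mult_iff zero_le_power2)
  then have "lp l \<sigma> = 0" using c13 by (simp add: lp_def)
  then show False using nz by simp
qed

lemma claim4:
  fixes l k :: "real^3"
  assumes l: "l \<noteq> 0" and k: "k \<noteq> 0" and nc: "\<not> (\<exists>c. k = c *\<^sub>R l)"
  shows "\<not> subface (F_lU l (proj_line k)) FT1ss"
proof
  assume "subface (F_lU l (proj_line k)) FT1ss"
  then obtain \<sigma> :: "real^3^3" where inv: "invertible \<sigma>" and sub: "F_lU l (proj_line k) \<subseteq> act \<sigma> ` face_of_form f2"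
    unfolding subface_def FT1ss_def by blast
  have "(\<lambda>v. (l \<bullet> v)^2 * (k \<bullet> v)^2) \<in> F_lU l (proj_line k)"
    by (rule FlU_sq) (simp add: proj_line_def)
  from extractF[OF inv sub this] obtain \<epsilon> where e: "\<epsilon> > 0"
    and ineq: "\<And>w. w \<noteq> 0 \<Longrightarrow> \<epsilon> * ((l \<bullet> (\<sigma> *v w))^2 * (k \<bullet> (\<sigma> *v w))^2) \<le> f2 w" by blast
  have nzl: "lp l \<sigma> \<noteq> 0" by (rule lp_nz[OF inv l])
  have nzk: "lp k \<sigma> \<noteq> 0" by (rule lp_nz[OF inv k])
  have "8 \<le> 2 * (order 0 (lp l \<sigma>) + order 0 (lp k \<sigma>))"
    by (rule NEG[OF inv e _ crv2 nzl nzk]) (use ineq in \<open>simp add: mult.assoc\<close>)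
  moreover have "order 0 (lp l \<sigma>) \<le> 2" "order 0 (lp k \<sigma>) \<le> 2" using order_lp_le nzl nzk by auto
  ultimately have "2 \<le> order 0 (lp l \<sigma>)" "2 \<le> order 0 (lp k \<sigma>)" by presburger+
  from order_ge2[OF nzl this(1)] order_ge2[OF nzk this(2)]
  have c: "l \<bullet> (\<sigma> *v axis 1 1) = 0" "l \<bullet> (\<sigma> *v axis 3 1) = 0"
     "k \<bullet> (\<sigma> *v axis 1 1) = 0" "k \<bullet> (\<sigma> *v axis 3 1) = 0"
    by (simp_all add: lp_def)
  have k2: "k \<bullet> (\<sigma> *v axis 2 1) \<noteq> 0"
  proof
    assume "k \<bullet> (\<sigma> *v axis 2 1) = 0"
    then have "lp k \<sigma> = 0" using c by (simp add: lp_def)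
    then show False using nzk by simp
  qed
  define lam where "lam = (l \<bullet> (\<sigma> *v axis 2 1)) / (k \<bullet> (\<sigma> *v axis 2 1))"
  have "(l - lam *\<^sub>R k) \<bullet> (\<sigma> *v w) = 0" for w
  proof -
    have "(l - lam *\<^sub>R k) \<bullet> (\<sigma> *v axis 2 1) = 0"
      using k2 by (simp add: inner_diff_left lam_def)
    moreover have "(l - lam *\<^sub>R k) \<bullet> (\<sigma> *v axis 1 1) = 0" "(l - lam *\<^sub>R k) \<bullet> (\<sigma> *v axis 3 1) = 0"
      using c by (simp_all add: inner_diff_left)
    ultimately show ?thesis by (subst inner_mat) simp
  qed
  then have "l - lam *\<^sub>R k = 0" by (rule inner_mat_zero[OF inv])
  then have lk: "l = lam *\<^sub>R k" by simp
  then have "lam \<noteq> 0" using l by auto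
  then have "k = (1/lam) *\<^sub>R l" using lk by simp
  then show False using nc by blast
qed

lemma claim2:
  fixes l q :: "real^3"
  assumes l: "l \<noteq> 0" and lq: "l \<bullet> q \<noteq> 0"
  shows "\<not> subface (F_lU l (proj_point q)) FT1s"
proof
  assume "subface (F_lU l (proj_point q)) FT1s"
  then obtain \<sigma> :: "real^3^3" where inv: "invertible \<sigma>" and sub: "F_lU l (proj_point q) \<subseteq> act \<sigma> ` face_of_form f1"
    unfolding subface_def FT1s_def by blast
  define c1 where "c1 = \<sigma> *v axis 1 1"
  define c3 where "c3 = \<sigma> *v axis 3 1"
  have nzl: "lp l \<sigma> \<noteq> 0" by (rule lp_nz[OF inv l])
  have K: "l \<bullet> c1 = 0 \<and> u \<bullet> c1 = 0" if uq: "u \<bullet> q = 0" and nzu: "lp u \<sigma> \<noteq> 0" for u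
  proof -
    have "span {q} \<subseteq> {x. u \<bullet> x = 0}"
      by (rule span_minimal) (use uq subspace_hyperplane[of u] in \<open>auto simp: inner_commute\<close>)
    then have "(\<lambda>v. (l \<bullet> v)^2 * (u \<bullet> v)^2) \<in> F_lU l (proj_point q)"
      by (intro FlU_sq) (auto simp: proj_point_def)
    from extractF[OF inv sub this] obtain \<epsilon> where e: "\<epsilon> > 0"
      and ineq: "\<And>w. w \<noteq> 0 \<Longrightarrow> \<epsilon> * ((l \<bullet> (\<sigma> *v w))^2 * (u \<bullet> (\<sigma> *v w))^2) \<le> f1 w" by blast
    have "6 \<le> 2 * (order 0 (lp l \<sigma>) + order 0 (lp u \<sigma>))"
      by (rule NEG[OF inv e _ crv1 nzl nzu]) (use ineq in \<open>simp add: mult.assoc\<close>)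
    moreover have "order 0 (lp l \<sigma>) \<le> 2" "order 0 (lp u \<sigma>) \<le> 2" using order_lp_le nzl nzu by auto
    ultimately have "1 \<le> order 0 (lp l \<sigma>)" "1 \<le> order 0 (lp u \<sigma>)" by presburger+
    from order_ge1[OF nzl this(1)] order_ge1[OF nzu this(2)] show ?thesis
      by (simp add: lp_def c1_def)
  qed
  have q: "q \<noteq> 0" using lq by auto
  then have qq: "q \<bullet> q \<noteq> 0" by simp
  have c1nz: "c1 \<noteq> 0" unfolding c1_def by (rule mat_nz[OF inv]) (simp add: axis_eq_0_iff)
  define t1 where "t1 = (q \<bullet> c1) / (q \<bullet> q)"
  define t3 where "t3 = (q \<bullet> c3) / (q \<bullet> q)"
  define ua where "ua = c1 - t1 *\<^sub>R q"
  define ub where "ub = c3 - t3 *\<^sub>R q"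
  have uaq: "ua \<bullet> q = 0"
  proof -
    have "ua \<bullet> q = c1 \<bullet> q - t1 * (q \<bullet> q)" by (simp add: ua_def inner_diff_left)
    then show ?thesis using qq by (simp add: t1_def inner_commute)
  qed
  have ubq: "ub \<bullet> q = 0"
  proof -
    have "ub \<bullet> q = c3 \<bullet> q - t3 * (q \<bullet> q)" by (simp add: ub_def inner_diff_left)
    then show ?thesis using qq by (simp add: t3_def inner_commute)
  qed
  have "ua \<bullet> c1 = 0"
  proof (cases "lp ua \<sigma> = 0")
    case True
    then have "coeff (lp ua \<sigma>) 0 = 0" by simp
    then show ?thesis by (simp add: lp_def c1_def)
  next
    case False then show ?thesis using K[OF uaq] by blast
  qed
  then have "ua \<bullet> ua = 0" using uaq by (simp add: ua_def inner_diff_right inner_commute)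
  then have "ua = 0" by simp
  then have c1q: "c1 = t1 *\<^sub>R q" by (simp add: ua_def)
  show False
  proof (cases "lp ub \<sigma> = 0")
    case False
    then have "l \<bullet> c1 = 0" using K[OF ubq] by blast
    then have "t1 = 0" using lq by (simp add: c1q)
    then show False using c1nz c1q by simp
  next
    case True
    then have "coeff (lp ub \<sigma>) 1 = 0" by simp
    then have "ub \<bullet> c3 = 0" by (simp add: lp_def c3_def)
    then have "ub \<bullet> ub = 0" using ubq by (simp add: ub_def inner_diff_right inner_commute)
    then have "ub = 0" by simp
    then have c3q: "c3 = t3 *\<^sub>R q" by (simp add: ub_def)
    have "\<sigma> *v (vector [t3, 0, -t1]) = t3 *\<^sub>R c1 - t1 *\<^sub>R c3"
      by (subst mat_cols) (simp add: c1_def c3_def)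
    also have "\<dots> = 0" by (simp add: c1q c3q)
    finally have "vector [t3, 0, -t1] = (0::real^3)"
      using mat_nz[OF inv] by blast
    then have "(vector [t3, 0, -t1] :: real^3) $ 1 = 0" by simp
    then have "t3 = 0" by simp
    have "(vector [t3, 0, -t1] :: real^3) $ 3 = 0" using \<open>vector [t3, 0, -t1] = 0\<close> by simp
    then have "t1 = 0" by simp
    then show False using c1nz c1q by simp
  qed
qed


theorem mainTheorem20:
  fixes l k p q :: "real^3"
  assumes "l \<noteq> 0" and "k \<noteq> 0" and "\<not> (\<exists>c. k = c *\<^sub>R l)"
    and "p \<noteq> 0" and "l \<bullet> p = 0"
    and "l \<bullet> q \<noteq> 0"
  shows "(subface (F_lU l (proj_point p)) FT1s \<and> \<not> subface (F_lU l (proj_point q)) FT1s)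
    \<and> (subface (F_lU l (proj_line l)) FT1ss \<and> \<not> subface (F_lU l (proj_line k)) FT1ss)
    \<and> (subface (F_lU l (proj_line k)) FT2s \<and> \<not> subface (F_lU l (proj_line l)) FT2s)
    \<and> (subface FQ FT1s \<and> subface FQ FT1ss \<and> subface FQ FT2s)"
    using claim1[OF assms(1,4,5)] claim2[OF assms(1,6)] claim3[OF assms(1,4,5)]
    claim4[OF assms(1,2,3)] claim5[OF assms(1,3)] claim6[OF assms(1)] claimQ1 claimQ2 claimQ3
  by blast

end
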